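(* Let $n\ge 2$ and let $\mathsf u$ be a subword of $\bm\lambda_n$ with $u_1u_2\cdots u_{n(n-1)}=e$. Then for every integer $k$ and all integers $a,b$ with $0\le b-a<n(n-1)$, $$\big|(u_au_{a+1}\cdots u_b)(k)-k\big|\le n-2,$$ where indices of $\mathsf u$ are taken modulo $n(n-1)$ (i.e. $u_i:=u_{i'}$ with $1\le i'\le n(n-1)$, $i'\equiv i\pmod{n(n-1)}$).
   Context: $\widetilde S_n$ is the group, under composition, of bijections $w:\mathbb Z\to\mathbb Z$ with $w(i+n)=w(i)+n$ and $\sum_{i=1}^n w(i)=\binom{n+1}2$; $s_i=(\!(i,i+1)\!)$ for $i\in\{0,\dots,n-1\}$, where $(\!(i,j)\!)$ swaps $i+kn$ and $j+kn$ for all $k\in\mathbb Z$. $\bm\lambda_n$ is the word $[s_0,\dots,s_{n-1}]$ repeated $n-1$ times, with $j$-th letter $\sigma_j=s_{(j-1)\bmod n}$ (index in $\{0,\dots,n-1\}$). A subword is $\mathsf u=[u_1,\dots,u_{n(n-1)}]$ with each $u_j\in\{\sigma_j,e\}$. *)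

theory Defs
  imports Main
begin

text \<open>Affine transposition ((i,j)): swaps i+kn and j+kn for all integers k
  (meant for i, j distinct mod n).\<close>
definition aff_transp :: "nat \<Rightarrow> int \<Rightarrow> int \<Rightarrow> int \<Rightarrow> int" where
  "aff_transp n i j x =
     (if x mod int n = i mod int n then x + (j - i)
      else if x mod int n = j mod int n then x - (j - i)
      else x)"

definition s_refl :: "nat \<Rightarrow> nat \<Rightarrow> int \<Rightarrow> int" where
  "s_refl n i = aff_transp n (int i) (int i + 1)"

definition lam_letter :: "nat \<Rightarrow> nat \<Rightarrow> int \<Rightarrow> int" where
  "lam_letter n j = s_refl n ((j - 1) mod n)"

definition is_subword :: "nat \<Rightarrow> (nat \<Rightarrow> int \<Rightarrow> int) \<Rightarrow> bool" where
  "is_subword n u \<longleftrightarrow> (\<forall>j\<in>{1..n*(n-1)}. u j = lam_letter n j \<or> u j = id)"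

definition cyc_letter :: "nat \<Rightarrow> (nat \<Rightarrow> int \<Rightarrow> int) \<Rightarrow> int \<Rightarrow> int \<Rightarrow> int" where
  "cyc_letter n u i = u (nat ((i - 1) mod int (n*(n-1))) + 1)"

text \<open>Product u_a u_{a+1} ... u_b (composition; rightmost factor applied first).\<close>
definition word_prod :: "(int \<Rightarrow> int \<Rightarrow> int) \<Rightarrow> int \<Rightarrow> int \<Rightarrow> int \<Rightarrow> int" where
  "word_prod f a b = foldr (\<lambda>i g. f i \<circ> g) [a..b] id"

end

theory Submission imports Defs begin
lemma divh: fixes d m r :: int assumes "0 \<le> r" "r < d" shows "(d*m + r) div d = m"
proof -
  have "(r + m*d) div d = r div d + m" using assms by simp
  moreover have "r div d = 0" using assms by simp
  ultimately show ?thesis by (simp add: add.commute mult.commute)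
qed

lemma K_facts:
  fixes n :: nat and c v :: int
  assumes "n \<ge> 2" "v mod int n = c mod int n"
  shows "(v + 2 - c + int n - 1) div int n = (v - c + int n - 1) div int n + 1"
    and "(v + 1 - c + int n - 1) div int n = (v - c + int n - 1) div int n + 1"
proof -
  have "int n dvd (v - c)" using assms by (simp add: mod_eq_dvd_iff)
  then obtain m where m: "v - c = int n * m" by (auto simp: dvd_def)
  have a0: "v - c + int n - 1 = int n * m + (int n - 1)" using m by simp
  have a: "(v - c + int n - 1) div int n = m"
    unfolding a0 using divh[of "int n - 1" "int n" m] assms by simp
  have b: "(v + 2 - c + int n - 1) div int n = m + 1"
    using divh[of "1" "int n" "m+1"] assms m by (simp add: algebra_simps)
  have c: "(v + 1 - c + int n - 1) div int n = m + 1"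
    using divh[of "0" "int n" "m+1"] assms m by (simp add: algebra_simps)
  show "(v + 2 - c + int n - 1) div int n = (v - c + int n - 1) div int n + 1" using a b by simp
  show "(v + 1 - c + int n - 1) div int n = (v - c + int n - 1) div int n + 1" using a c by simp
qed

lemma K_eq:
  fixes n :: nat and c a b :: int
  assumes "n \<ge> 2" "b mod int n = (c+1) mod int n" "a \<le> b"
    "(a - c + int n - 1) div int n = (b - c + int n - 1) div int n"
  shows "a = b"
proof -
  have "int n dvd (b - (c+1))" using assms by (simp add: mod_eq_dvd_iff)
  then obtain m where m: "b - c = int n * m + 1" by (auto simp: dvd_def algebra_simps)
  have kb: "(b - c + int n - 1) div int n = m + 1"
    using divh[of "0" "int n" "m+1"] assms m by (simp add: algebra_simps)
  show ?thesis
  proof (rule ccontr)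
    assume "a \<noteq> b"
    hence "a - c + int n - 1 < int n * (m+1)" using assms m by (simp add: algebra_simps)
    hence "a - c + int n - 1 \<le> int n * m + (int n - 1)" by (simp add: algebra_simps)
    hence "(a - c + int n - 1) div int n \<le> (int n * m + (int n - 1)) div int n"
      using assms by (intro zdiv_mono1) auto
    also have "\<dots> = m" using divh[of "int n - 1" "int n" m] assms by simp
    finally have "(a - c + int n - 1) div int n < m + 1" by simp
    thus False using kb assms by simp
  qed
qed

lemma traj_upper:
  fixes n :: nat and c :: int and z :: "nat \<Rightarrow> int"
  assumes n2: "n \<ge> 2"
  and step: "\<And>t. z (Suc t) = z t + 1 \<or> (z (Suc t) = z t + 2 \<and> z t mod int n = c mod int n)
      \<or> (z (Suc t) = z t \<and> z t mod int n = (c+1) mod int n)"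
  and per: "\<And>t. z (t + n*(n-1)) = z t + int (n*(n-1))"
  and tt: "t \<le> t'" "t' \<le> t + n*(n-1)"
  shows "(z t' - int t') - (z t - int t) \<le> int n - 2"
proof -
  define N where "N = n*(n-1)"
  define K where "K v = (v - c + int n - 1) div int n" for v
  define x where "x s = z s - int s" for s
  define \<Phi> where "\<Phi> s = x s - K (z s)" for s
  have np: "int n > 0" using n2 by simp
  have Kmono: "K v \<le> K w" if "v \<le> w" for v w
    unfolding K_def using that np by (intro zdiv_mono1) auto
  have zmono1: "z t1 \<le> z (Suc t1)" for t1 using step[of t1] by auto
  have zmono: "z t1 \<le> z t2" if "t1 \<le> t2" for t1 t2
    using lift_Suc_mono_le[of z, OF zmono1 that] .
  have K2: "K (v+2) = K v + 1" "K (v+1) = K v + 1" if "v mod int n = c mod int n" for v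
    using K_facts[OF n2 that] unfolding K_def by (simp_all add: algebra_simps)
  have Phi1: "\<Phi> (Suc s) \<le> \<Phi> s" for s
  proof -
    consider (a) "z (Suc s) = z s + 1" | (b) "z (Suc s) = z s + 2" "z s mod int n = c mod int n"
      | (d) "z (Suc s) = z s" using step[of s] by blast
    then show ?thesis
    proof cases
      case a
      then show ?thesis using Kmono[of "z s" "z s + 1"] unfolding \<Phi>_def x_def by simp
    next
      case b
      then show ?thesis using K2(1)[OF b(2)] unfolding \<Phi>_def x_def by simp
    next
      case d
      then show ?thesis unfolding \<Phi>_def x_def by simp
    qed
  qed
  have Phimono: "\<Phi> t2 \<le> \<Phi> t1" if "t1 \<le> t2" for t1 t2
    using lift_Suc_antimono_le[of \<Phi>, OF Phi1 that] .
  have Phistrict: "\<Phi> (Suc p) < \<Phi> p" if "z (Suc p) mod int n = (c+1) mod int n" for p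
  proof -
    consider (a) "z (Suc p) = z p + 1" | (b) "z (Suc p) = z p + 2" "z p mod int n = c mod int n"
      | (d) "z (Suc p) = z p" using step[of p] by blast
    then show ?thesis
    proof cases
      case a
      then have "z p mod int n = c mod int n" using that
        using mod_diff_cong[of "z p + 1" "int n" "c + 1" 1 1] by simp
      then show ?thesis using a K2(2) unfolding \<Phi>_def x_def by simp
    next
      case b
      then have "(z p + 2) mod int n = (c + 2) mod int n" by (metis mod_add_cong)
      with b that have "(c+2) mod int n = (c+1) mod int n" by simp
      hence "int n dvd (c+2) - (c+1)" by (simp only: mod_eq_dvd_iff)
      hence "int n dvd 1" by simp
      with n2 show ?thesis by simp
    next
      case d
      then show ?thesis unfolding \<Phi>_def x_def by simp
    qed
  qed
  have KN: "K (v + int N) = K v + int (n-1)" for v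
  proof -
    have e: "v + int N - c + int n - 1 = (v - c + int n - 1) + int (n-1) * int n"
      unfolding N_def using n2 by (simp add: of_nat_mult)
    have "K (v + int N) = ((v - c + int n - 1) + int (n-1) * int n) div int n"
      unfolding K_def by (simp only: e)
    also have "\<dots> = K v + int (n-1)" unfolding K_def using np
      by simp
    finally show ?thesis .
  qed
  have xper: "x (s + N) = x s" for s using per[of s] unfolding x_def N_def by simp
  show ?thesis
  proof (rule ccontr)
    assume bad: "\<not> ?thesis"
    hence bad': "x t' - x t \<ge> int n - 1" unfolding x_def by simp
    have "\<Phi> t' \<le> \<Phi> t" using Phimono tt by simp
    hence k1: "K (z t') - K (z t) \<ge> int n - 1" using bad' unfolding \<Phi>_def by simp
    have "z t' \<le> z (t + N)" using zmono tt unfolding N_def by simp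
    hence "K (z t') \<le> K (z (t+N))" using Kmono by simp
    also have "\<dots> = K (z t) + int (n-1)" using per[of t] KN unfolding N_def by simp
    finally have KtN: "K (z t') = K (z (t+N))" using k1 n2 per[of t] KN unfolding N_def by simp
    have "x (t+N) < x t'" using xper[of t] bad' n2 by simp
    then obtain s where s: "t' \<le> s" "s < t + N" "z (Suc s) = z s"
    proof -
      assume h: "\<And>s. t' \<le> s \<Longrightarrow> s < t + N \<Longrightarrow> z (Suc s) = z s \<Longrightarrow> thesis"
      show thesis
      proof (rule ccontr)
        assume nt: "\<not> thesis"
        have "x t' \<le> x (t'+ j)" if "t' + j \<le> t + N" for j
          using that
        proof (induction j)
          case 0 then show ?case by simp
        next
          case (Suc j)
          have "z (Suc (t'+j)) \<noteq> z (t'+j)" using h nt Suc.prems by force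
          hence "z (Suc (t'+j)) \<ge> z (t'+j) + 1" using step[of "t'+j"] by auto
          hence "x (t' + j) \<le> x (t' + Suc j)" unfolding x_def by simp
          with Suc show ?case by simp
        qed
        from this[of "t + N - t'"] tt have "x t' \<le> x (t+N)" unfolding N_def by simp
        with \<open>x (t+N) < x t'\<close> show False by simp
      qed
    qed
    have zs: "z s mod int n = (c+1) mod int n" using step[of s] s(3) by auto
    have "K (z t') \<le> K (z s)" using Kmono zmono s by simp
    moreover have "K (z s) \<le> K (z (t+N))" using Kmono zmono s by simp
    ultimately have "K (z t') = K (z s)" using KtN by simp
    hence "z t' = z s" using K_eq[OF n2 zs] zmono[OF s(1)] unfolding K_def by simp
    hence zt': "z t' mod int n = (c+1) mod int n" using zs by simp
    have "t' \<noteq> t" using bad' n2 by auto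
    then obtain p where p: "t' = Suc p" "t \<le> p" using tt by (cases t') auto
    have "\<Phi> t' < \<Phi> p" using Phistrict[of p] zt' p by simp
    also have "\<Phi> p \<le> \<Phi> t" using Phimono p by simp
    finally have "x t' - x t < K (z t') - K (z t)" unfolding \<Phi>_def by simp
    moreover have "K (z t') - K (z t) = int n - 1" using KtN per[of t] KN n2 unfolding N_def by simp
    ultimately show False using bad' by simp
  qed
qed

lemma wp_empty: "b < a \<Longrightarrow> word_prod f a b = id"
  unfolding word_prod_def by simp

lemma wp_cons: "a \<le> b \<Longrightarrow> word_prod f a b = f a \<circ> word_prod f (a+1) b"
  unfolding word_prod_def by (simp add: upto.simps[of a b])

lemma wp_split_aux: "a + int d = m + 1 \<Longrightarrow> m \<le> b \<Longrightarrow>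
   word_prod f a b = word_prod f a m \<circ> word_prod f (m+1) b"
proof (induction d arbitrary: a)
  case 0 then show ?case using wp_empty[of m a f] by simp
next
  case (Suc d)
  have am: "a \<le> m" using Suc.prems by simp
  have "word_prod f a b = f a \<circ> word_prod f (a+1) b" using am Suc.prems by (intro wp_cons) simp
  also have "word_prod f (a+1) b = word_prod f (a+1) m \<circ> word_prod f (m+1) b"
    using Suc.prems by (intro Suc.IH) simp_all
  also have "f a \<circ> (word_prod f (a+1) m \<circ> word_prod f (m+1) b) = word_prod f a m \<circ> word_prod f (m+1) b"
    using wp_cons[OF am, of f] by (simp add: comp_assoc)
  finally show ?case .
qed

lemma wp_split: "a \<le> m + 1 \<Longrightarrow> m \<le> b \<Longrightarrow>
   word_prod f a b = word_prod f a m \<circ> word_prod f (m+1) b"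
  using wp_split_aux[of a "nat (m+1-a)" m b f] by simp

lemma wp_snoc: "a \<le> b \<Longrightarrow> word_prod f a b = word_prod f a (b-1) \<circ> f b"
proof -
  assume "a \<le> b"
  then have "word_prod f a b = word_prod f a (b-1) \<circ> word_prod f b b"
    using wp_split[of a "b-1" b f] by simp
  moreover have "word_prod f b b = f b" using wp_cons[of b b f] wp_empty[of b "b+1" f] by simp
  ultimately show ?thesis by simp
qed

lemma aff_invol:
  assumes "n \<ge> 2"
  shows "aff_transp n r (r+1) (aff_transp n r (r+1) y) = y"
proof -
  have ne: "(r+1) mod int n \<noteq> r mod int n"
  proof
    assume "(r+1) mod int n = r mod int n"
    hence "int n dvd (r+1) - r" by (simp only: mod_eq_dvd_iff)
    hence "int n dvd 1" by simp
    with assms show False by simp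
  qed
  show ?thesis
  proof (cases "y mod int n = r mod int n")
    case True
    have "(y+1) mod int n = (r+1) mod int n" using True by (metis mod_add_left_eq)
    then show ?thesis using True ne unfolding aff_transp_def by simp
  next
    case F1: False
    show ?thesis
    proof (cases "y mod int n = (r+1) mod int n")
      case True
      have "(y-1) mod int n = r mod int n"
        using mod_diff_cong[of y "int n" "r+1" 1 1] True by simp
      then show ?thesis using True F1 ne unfolding aff_transp_def by simp
    next
      case False
      then show ?thesis using F1 unfolding aff_transp_def by simp
    qed
  qed
qed

lemma letter_form:
  assumes n2: "n \<ge> 2" and sw: "is_subword n u"
  shows "cyc_letter n u i = id \<or>
     cyc_letter n u i = aff_transp n ((i-1) mod int n) ((i-1) mod int n + 1)"
proof -
  define N where "N = n*(n-1)"
  have Npos: "int N > 0" unfolding N_def using n2 by simp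
  define j where "j = nat ((i-1) mod int N) + 1"
  have lt: "(i-1) mod int N < int N" "0 \<le> (i-1) mod int N" using Npos by simp_all
  have "nat ((i-1) mod int N) < N" using lt by (simp add: nat_less_iff)
  hence j: "j \<in> {1..n*(n-1)}" unfolding j_def N_def[symmetric] by simp
  have f: "cyc_letter n u i = u j" unfolding cyc_letter_def j_def N_def by simp
  have "int ((j-1) mod n) = ((i-1) mod int N) mod int n"
    unfolding j_def using Npos by (simp add: zmod_int)
  also have "\<dots> = (i-1) mod int n"
    unfolding N_def by (simp add: mod_mod_cancel)
  finally have r: "int ((j-1) mod n) = (i-1) mod int n" .
  have "lam_letter n j = aff_transp n ((i-1) mod int n) ((i-1) mod int n + 1)"
    unfolding lam_letter_def s_refl_def r ..
  moreover have "u j = lam_letter n j \<or> u j = id" using sw j unfolding is_subword_def by blast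
  ultimately show ?thesis using f by auto
qed

lemma cyc_per: "cyc_letter n u (i + int (n*(n-1))) = cyc_letter n u i"
proof -
  have "(i + int (n*(n-1)) - 1) mod int (n*(n-1)) = ((i-1) + int (n*(n-1))) mod int (n*(n-1))"
    by (simp add: algebra_simps)
  also have "\<dots> = (i-1) mod int (n*(n-1))" by (rule mod_add_self2)
  finally show ?thesis unfolding cyc_letter_def by simp
qed

lemma cyc_invol:
  assumes n2: "n \<ge> 2" and sw: "is_subword n u"
  shows "cyc_letter n u i \<circ> cyc_letter n u i = id"
  using letter_form[OF n2 sw, of i] aff_invol[OF n2] by (auto simp: fun_eq_iff)

lemma rotation:
  assumes n2: "n \<ge> 2" and sw: "is_subword n u"
    and full: "word_prod (cyc_letter n u) 1 (int (n*(n-1))) = id"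
  shows "word_prod (cyc_letter n u) j (j + int (n*(n-1)) - 1) = id"
proof -
  define N where "N = int (n*(n-1))"
  define f where "f = cyc_letter n u"
  have N2: "N \<ge> 2" unfolding N_def using n2
    by (metis One_nat_def diff_Suc_1 le_add_diff_inverse mult_le_mono nat_mult_1 numeral_2_eq_2 of_nat_le_iff of_nat_numeral Suc_le_mono le_Suc_eq mult_2 mult_Suc_right mult_le_mono1)
  have per: "f (i + N) = f i" for i unfolding f_def N_def by (rule cyc_per)
  have inv: "f i \<circ> f i = id" for i unfolding f_def by (rule cyc_invol[OF n2 sw])
  have dec: "word_prod f i (i + N - 1) = f i \<circ> word_prod f (i+1) (i + N - 1)" for i
    using N2 by (intro wp_cons) simp
  have snoc: "word_prod f (i+1) (i + N) = word_prod f (i+1) (i + N - 1) \<circ> f i" for i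
    using wp_snoc[of "i+1" "i+N" f] N2 per[of i] by simp
  have up: "word_prod f (i+1) (i + 1 + N - 1) = id" if "word_prod f i (i + N - 1) = id" for i
  proof -
    let ?R = "word_prod f (i+1) (i + N - 1)"
    have "f i \<circ> ?R = id" using that dec by simp
    hence "f i \<circ> (f i \<circ> ?R) = f i" by simp
    hence "?R = f i" using inv by (simp add: comp_assoc[symmetric])
    thus ?thesis using snoc[of i] inv by (simp add: algebra_simps)
  qed
  have down: "word_prod f (i - 1) (i - 1 + N - 1) = id" if "word_prod f i (i + N - 1) = id" for i
  proof -
    let ?R = "word_prod f i (i + N - 2)"
    have "?R \<circ> f (i - 1) = id" using that snoc[of "i-1"] by (simp add: algebra_simps)
    hence "(?R \<circ> f (i - 1)) \<circ> f (i - 1) = f (i - 1)" by simp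
    hence "?R = f (i-1)" using inv by (simp add: comp_assoc)
    thus ?thesis using dec[of "i-1"] inv by (simp add: algebra_simps)
  qed
  have "word_prod f j (j + N - 1) = id"
  proof (induction j rule: int_induct[where k=1])
    case base then show ?case using full unfolding f_def N_def by simp
  next
    case (step1 i) then show ?case using up[of i] by (simp only: add_ac)
  next
    case (step2 i) then show ?case using down[of i] by (simp only: add_ac)
  qed
  then show ?thesis unfolding f_def N_def .
qed

theorem lemma5p12:
  fixes n :: nat and u :: "nat \<Rightarrow> int \<Rightarrow> int"
  assumes "n \<ge> 2"
    and "is_subword n u"
    and "word_prod (cyc_letter n u) 1 (int (n*(n-1))) = id"
  shows "\<forall>k a b :: int. 0 \<le> b - a \<and> b - a < int (n*(n-1)) \<longrightarrow>
           \<bar>word_prod (cyc_letter n u) a b k - k\<bar> \<le> int n - 2"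
proof (intro allI impI)
  fix k a b :: int
  assume ab: "0 \<le> b - a \<and> b - a < int (n*(n-1))"
  note n2 = assms(1) and sw = assms(2)
  define f where "f = cyc_letter n u"
  define N where "N = n*(n-1)"
  define x where "x s = word_prod f (b - int s + 1) b k" for s :: nat
  define z where "z s = x s + int s" for s :: nat
  have xS: "x (Suc s) = f (b - int s) (x s)" for s
  proof -
    have "x (Suc s) = word_prod f (b - int s) b k" unfolding x_def by (simp add: algebra_simps)
    also have "\<dots> = f (b - int s) (word_prod f (b - int s + 1) b k)"
      using wp_cons[of "b - int s" b f] by simp
    finally show ?thesis unfolding x_def .
  qed
  have step: "z (Suc t) = z t + 1 \<or> (z (Suc t) = z t + 2 \<and> z t mod int n = (b-1) mod int n)
      \<or> (z (Suc t) = z t \<and> z t mod int n = ((b-1)+1) mod int n)" for t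
  proof -
    define r where "r = (b - int t - 1) mod int n"
    define y where "y = x t"
    have zt: "z t = y + int t" unfolding z_def y_def ..
    have zS: "z (Suc t) = f (b - int t) y + int t + 1" unfolding z_def y_def xS by simp
    consider (i) "f (b - int t) = id" | (a) "f (b - int t) = aff_transp n r (r + 1)"
      using letter_form[OF n2 sw, of "b - int t"] unfolding f_def r_def by auto
    then show ?thesis
    proof cases
      case i then show ?thesis using zS zt by simp
    next
      case a
      show ?thesis
      proof (cases "y mod int n = r mod int n")
        case True
        have "y mod int n = (b - int t - 1) mod int n" using True unfolding r_def by simp
        hence "(y + int t) mod int n = ((b - int t - 1) + int t) mod int n" by (rule mod_add_cong) simp
        hence "z t mod int n = (b-1) mod int n" using zt by simp
        moreover have "z (Suc t) = z t + 2" using zS zt a True unfolding aff_transp_def by simp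
        ultimately show ?thesis by simp
      next
        case F: False
        show ?thesis
        proof (cases "y mod int n = (r+1) mod int n")
          case True
          have "y mod int n = (b - int t) mod int n" using True unfolding r_def
            by (simp add: mod_add_left_eq)
          hence "(y + int t) mod int n = ((b - int t) + int t) mod int n" by (rule mod_add_cong) simp
          hence "z t mod int n = ((b-1)+1) mod int n" using zt by simp
          moreover have "z (Suc t) = z t" using zS zt a True F unfolding aff_transp_def by simp
          ultimately show ?thesis by simp
        next
          case False
          then show ?thesis using zS zt a F unfolding aff_transp_def by simp
        qed
      qed
    qed
  qed
  have xper: "x (t + N) = x t" for t
  proof -
    have "x (t + N) = word_prod f (b - int t - int N + 1) b k" unfolding x_def by (simp add: algebra_simps)
    also have "\<dots> = (word_prod f (b - int t - int N + 1) (b - int t) \<circ> word_prod f (b - int t + 1) b) k"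
      using wp_split[of "b - int t - int N + 1" "b - int t" b f] by simp
    also have "word_prod f (b - int t - int N + 1) (b - int t) = id"
      using rotation[OF n2 sw assms(3), of "b - int t - int N + 1"] unfolding f_def N_def
      by (simp add: algebra_simps)
    finally show ?thesis unfolding x_def by simp
  qed
  have per: "z (t + n*(n-1)) = z t + int (n*(n-1))" for t
    using xper[of t] unfolding z_def N_def by simp
  define L where "L = nat (b - a + 1)"
  have abN: "b - a < int N" using ab unfolding N_def by blast
  have LN: "L \<le> N" unfolding L_def using abN by (simp add: nat_le_iff)
  have xL: "x L = word_prod f a b k" unfolding x_def L_def using ab by simp
  have x0: "x 0 = k" unfolding x_def using wp_empty[of b "b+1" f] by simp
  have u1: "(z L - int L) - (z 0 - int 0) \<le> int n - 2"
    using traj_upper[of n z "b-1" 0 L, OF n2 step per] LN unfolding N_def by simp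
  have u2: "(z N - int N) - (z L - int L) \<le> int n - 2"
    using traj_upper[of n z "b-1" L N, OF n2 step per] LN unfolding N_def by simp
  have xN: "x N = k" using xper[of 0] x0 by simp
  show "\<bar>word_prod (cyc_letter n u) a b k - k\<bar> \<le> int n - 2"
    using u1 u2 xL x0 xN unfolding z_def f_def by simp
qed

end
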